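(* Assume the standing setting described in the context (in particular Conditions (I), (II), (III)). Let $y\in\mathbb{R}$ satisfy $g(y)>0$, and let $(\widehat{Y}_1(y),\widehat{Y}_2(y))\in\mathbb{K}_1^*\times\mathbb{K}_2^*$ be an optimal solution of the minimization problem defining $g(y)$. Then $$y-\rho\, g(y)\;\le\; y+\rho\,\tilde t\big(y,\widehat{Y}_2(y)\big)\;\le\; y^*.$$
   Context: Setting: $\mathbb{V}$ is a finite Cartesian product of spaces of real symmetric matrices, with the trace inner product $\langle X,Y\rangle$ and norm $\|X\|=\sqrt{\langle X,X\rangle}$; $I$ denotes the identity element of $\mathbb{V}$ and, for $A\in\mathbb{V}$, $\lambda_{\min}(A)$ ($\lambda_{\max}(A)$) is the smallest (largest) eigenvalue over all blocks. $\mathbb{K}_1$ is the cone of positive semidefinite elements of $\mathbb{V}$ (so $\mathbb{K}_1^*=\mathbb{K}_1$), $\mathbb{K}_2\subseteq\mathbb{V}$ is a closed convex cone, and for a cone $\mathbb{J}$, $\mathbb{J}^*=\{Y:\langle X,Y\rangle\ge0\ \forall X\in\mathbb{J}\}$. Condition (II): $(\mathbb{K}_1\cap\mathbb{K}_2)^*=\mathbb{K}_1^*+\mathbb{K}_2^*$. Given $Q,H\in\mathbb{V}$, consider the primal problem $\varphi^*=\inf\{\langle Q,X\rangle: X\in\mathbb{K}_1\cap\mathbb{K}_2,\ \langle H,X\rangle=1\}$ and its dual $y^*=\sup\{y: Q-Hy=Y_1+Y_2,\ Y_1\in\mathbb{K}_1^*,\ Y_2\in\mathbb{K}_2^*\}$.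 Condition (I): the primal problem is feasible and $H\in\mathbb{K}_1^*+\mathbb{K}_2^*$. Condition (III): a number $\rho>0$ is known such that $\langle I,X\rangle\le\rho$ for every feasible $X$ of the primal problem. Define $G(y)=Q-Hy$, and $$g(y)=\min\{\|G(y)-(Y_1+Y_2)\|: Y_1\in\mathbb{K}_1^*,\ Y_2\in\mathbb{K}_2^*\}.$$ For $y\in\mathbb{R}$ and $Y_2\in\mathbb{K}_2^*$, define $\tilde t(y,Y_2)=\min\{0,\lambda_{\min}(G(y)-Y_2)\}$. *)

theory Defs
  imports "HOL-Analysis.Analysis"
begin

text \<open>The space V (a finite Cartesian product of spaces of real symmetric matrices)
is modelled as the space of real symmetric block-diagonal matrices of type
real^'n^'n, where the block structure is given by a map blk: entries (i,j)
with blk i different from blk j vanish. The trace inner product of symmetric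
matrices is the Frobenius inner product, which is the library inner product
on real^'n^'n; the norm is the induced one.\<close>

definition Vspace :: "('n::finite \<Rightarrow> 'b) \<Rightarrow> (real^'n^'n) set" where
  "Vspace blk = {X. transpose X = X \<and> (\<forall>i j. blk i \<noteq> blk j \<longrightarrow> X$i$j = 0)}"

definition psd_cone :: "('n::finite \<Rightarrow> 'b) \<Rightarrow> (real^'n^'n) set" where
  "psd_cone blk = {X \<in> Vspace blk. \<forall>x::real^'n. 0 \<le> x \<bullet> (X *v x)}"

definition dual_cone :: "('n::finite \<Rightarrow> 'b) \<Rightarrow> (real^'n^'n) set \<Rightarrow> (real^'n^'n) set" where
  "dual_cone blk J = {Y \<in> Vspace blk. \<forall>X\<in>J. 0 \<le> X \<bullet> Y}"

definition mat_eigenvalues :: "real^'n^'n \<Rightarrow> real set" where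
  "mat_eigenvalues A = {l. \<exists>v. v \<noteq> 0 \<and> A *v v = l *s v}"

text \<open>Smallest eigenvalue; for block-diagonal matrices this is the smallest
eigenvalue over all blocks.\<close>
definition lambda_min :: "real^'n^'n \<Rightarrow> real" where
  "lambda_min A = Min (mat_eigenvalues A)"

definition Gmap :: "real^'n^'n \<Rightarrow> real^'n^'n \<Rightarrow> real \<Rightarrow> real^'n^'n" where
  "Gmap Q H y = Q - y *\<^sub>R H"

definition gfun :: "('n::finite \<Rightarrow> 'b) \<Rightarrow> (real^'n^'n) set \<Rightarrow> real^'n^'n \<Rightarrow> real^'n^'n \<Rightarrow> real \<Rightarrow> real" where
  "gfun blk K2 Q H y = Inf {norm (Gmap Q H y - (Y1 + Y2)) | Y1 Y2.
      Y1 \<in> dual_cone blk (psd_cone blk) \<and> Y2 \<in> dual_cone blk K2}"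

definition ttilde :: "real^'n^'n \<Rightarrow> real^'n^'n \<Rightarrow> real \<Rightarrow> real^'n^'n \<Rightarrow> real" where
  "ttilde Q H y Y2 = min 0 (lambda_min (Gmap Q H y - Y2))"

definition primal_feasible :: "('n::finite \<Rightarrow> 'b) \<Rightarrow> (real^'n^'n) set \<Rightarrow> real^'n^'n \<Rightarrow> (real^'n^'n) set" where
  "primal_feasible blk K2 H = {X. X \<in> psd_cone blk \<inter> K2 \<and> H \<bullet> X = 1}"

definition dual_opt :: "('n::finite \<Rightarrow> 'b) \<Rightarrow> (real^'n^'n) set \<Rightarrow> real^'n^'n \<Rightarrow> real^'n^'n \<Rightarrow> real" where
  "dual_opt blk K2 Q H = Sup {y. \<exists>Y1 Y2. Gmap Q H y = Y1 + Y2 \<and>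
      Y1 \<in> dual_cone blk (psd_cone blk) \<and> Y2 \<in> dual_cone blk K2}"

end

theory Submission imports Defs begin

lemma smult_scaleR: "c *s (x::real^'n) = c *\<^sub>R x"
  by (simp add: vec_eq_iff)

lemma sym_inner:
  fixes A :: "real^'n^'n"
  assumes "transpose A = A"
  shows "(A *v x) \<bullet> y = x \<bullet> (A *v y)"
  by (metis assms dot_lmul_matrix vector_transpose_matrix)

lemma quad_zero:
  fixes a b :: real
  assumes "\<And>s. 0 \<le> a * s^2 + b * s"
  shows "b = 0"
proof -
  define c where "c = \<bar>a\<bar> + 1"
  have c: "c > 0" "a - c < 0" unfolding c_def by auto
  have "0 \<le> a * (-b/c)^2 + b * (-b/c)" by (rule assms)
  hence "0 \<le> (a * (-b/c)^2 + b * (-b/c)) * c^2" using c by simp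
  also have "\<dots> = b^2 * (a - c)" using c by (simp add: field_simps power2_eq_square)
  finally have "0 \<le> b^2 * (a - c)" .
  hence "b^2 \<le> 0" using c by (simp add: mult_le_0_iff zero_le_mult_iff)
  thus ?thesis by simp
qed

lemma eig_exists:
  fixes A :: "real^'n^'n"
  assumes sym: "transpose A = A" and S: "subspace S" and inv: "\<And>x. x \<in> S \<Longrightarrow> A *v x \<in> S"
    and ne: "S \<noteq> {0}"
  shows "\<exists>v\<in>S. norm v = 1 \<and> A *v v = (v \<bullet> (A *v v)) *\<^sub>R v"
proof -
  define f where "f x = x \<bullet> (A *v x)" for x
  define K where "K = S \<inter> sphere 0 1"
  have cK: "compact K" unfolding K_def
    by (simp add: S closed_Int_compact closed_subspace)
  obtain x where x: "x \<in> S" "x \<noteq> 0" using ne S subspace_0 by blast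
  have "(1/norm x) *\<^sub>R x \<in> K" using x S unfolding K_def
    by (simp add: subspace_scale)
  hence Kne: "K \<noteq> {}" by blast
  have cf: "continuous_on K f" unfolding f_def
    by (intro continuous_intros matrix_vector_mult_linear_continuous_on[unfolded o_def])
  obtain v where v: "v \<in> K" "\<And>y. y \<in> K \<Longrightarrow> f v \<le> f y"
    using continuous_attains_inf[OF cK Kne cf] by blast
  define mu where "mu = f v"
  have vS: "v \<in> S" and nv: "norm v = 1" using v(1) unfolding K_def by auto
  have low: "mu * (y \<bullet> y) \<le> f y" if "y \<in> S" for y
  proof (cases "y = 0")
    case True then show ?thesis by (simp add: f_def)
  next
    case False
    have "(1/norm y) *\<^sub>R y \<in> K" using that S False unfolding K_def by (simp add: subspace_scale)
    hence "mu \<le> f ((1/norm y) *\<^sub>R y)" using v(2) mu_def by blast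
    also have "\<dots> = f y / (norm y)^2" unfolding f_def
      by (simp add: matrix_vector_mult_scaleR power2_eq_square)
    finally have "mu * (norm y)^2 \<le> f y" using False by (simp add: field_simps)
    thus ?thesis by (simp add: power2_norm_eq_inner)
  qed
  define w where "w = A *v v - mu *\<^sub>R v"
  have wS: "w \<in> S" unfolding w_def using S inv vS by (simp add: subspace_diff subspace_scale)
  have "\<forall>s. 0 \<le> (f w - mu * (w \<bullet> w)) * s^2 + (2 * (w \<bullet> w)) * s"
  proof
    fix s :: real
    have yS: "v + s *\<^sub>R w \<in> S" using S vS wS by (simp add: subspace_add subspace_scale)
    have e1: "f (v + s *\<^sub>R w) = mu + 2 * s * (w \<bullet> (A *v v)) + s^2 * f w"
      unfolding f_def mu_def
      using sym_inner[OF sym, of w v]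
      by (simp add: matrix_vector_right_distrib matrix_vector_mult_scaleR inner_add_left inner_add_right
          algebra_simps power2_eq_square inner_commute)
    have e2: "(v + s *\<^sub>R w) \<bullet> (v + s *\<^sub>R w) = 1 + 2 * s * (w \<bullet> v) + s^2 * (w \<bullet> w)"
      using nv by (simp add: inner_add_left inner_add_right algebra_simps power2_eq_square inner_commute
          norm_eq_1)
    have "mu * ((v + s *\<^sub>R w) \<bullet> (v + s *\<^sub>R w)) \<le> f (v + s *\<^sub>R w)" using low yS by blast
    hence "0 \<le> 2 * s * (w \<bullet> (A *v v) - mu * (w \<bullet> v)) + s^2 * (f w - mu * (w \<bullet> w))"
      unfolding e1 e2 by (simp add: algebra_simps)
    moreover have "w \<bullet> (A *v v) - mu * (w \<bullet> v) = w \<bullet> w"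
      unfolding w_def[symmetric] by (simp add: w_def inner_diff_right)
    ultimately show "0 \<le> (f w - mu * (w \<bullet> w)) * s^2 + (2 * (w \<bullet> w)) * s"
      by (simp add: algebra_simps)
  qed
  hence "2 * (w \<bullet> w) = 0" using quad_zero by blast
  hence "w = 0" by simp
  hence "A *v v = mu *\<^sub>R v" unfolding w_def by simp
  thus ?thesis using vS nv unfolding mu_def f_def by blast
qed

lemma spectral_sub:
  fixes A :: "real^'n^'n"
  assumes sym: "transpose A = A"
  shows "subspace S \<Longrightarrow> (\<And>x. x \<in> S \<Longrightarrow> A *v x \<in> S) \<Longrightarrow>
    \<exists>B. B \<subseteq> S \<and> pairwise orthogonal B \<and> (\<forall>v\<in>B. norm v = 1 \<and> A *v v = (v \<bullet> (A *v v)) *\<^sub>R v)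
      \<and> span B = S"
proof (induction "dim S" arbitrary: S rule: less_induct)
  case less
  show ?case
  proof (cases "S = {0}")
    case True
    then show ?thesis by (intro exI[of _ "{}"]) auto
  next
    case False
    obtain v where v: "v \<in> S" "norm v = 1" "A *v v = (v \<bullet> (A *v v)) *\<^sub>R v"
      using eig_exists[OF sym less.prems(1) less.prems(2) False] by blast
    define S' where "S' = S \<inter> {x. v \<bullet> x = 0}"
    have sS': "subspace S'" unfolding S'_def by (rule subspace_inter[OF less.prems(1) subspace_hyperplane])
    have iS': "A *v x \<in> S'" if "x \<in> S'" for x
    proof -
      have "v \<bullet> (A *v x) = (A *v v) \<bullet> x" using sym_inner[OF sym] by simp
      also have "\<dots> = 0" using that v(3) unfolding S'_def by (metis (mono_tags, lifting) inner_scaleR_left mem_Collect_eq mult_zero_right IntD2)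
      finally show ?thesis using that less.prems(2) unfolding S'_def by auto
    qed
    have vv: "v \<bullet> v = 1" using v(2) by (simp add: norm_eq_1)
    have "v \<notin> S'" unfolding S'_def using vv by auto
    hence "S' \<subset> S" unfolding S'_def using v(1) by blast
    hence "span S' \<subset> span S" using sS' less.prems(1) by (simp add: span_eq_iff[THEN iffD2])
    hence "dim S' < dim S" by (rule dim_psubset)
    then obtain B' where B': "B' \<subseteq> S'" "pairwise orthogonal B'"
       "\<forall>v\<in>B'. norm v = 1 \<and> A *v v = (v \<bullet> (A *v v)) *\<^sub>R v" "span B' = S'"
      using less.hyps[OF _ sS' iS'] by blast
    define B where "B = insert v B'"
    have "B \<subseteq> S" unfolding B_def using B'(1) v(1) S'_def by auto
    moreover have "pairwise orthogonal B" unfolding B_def using B'(1,2) S'_def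
      by (auto simp: pairwise_insert orthogonal_def inner_commute)
    moreover have "\<forall>v\<in>B. norm v = 1 \<and> A *v v = (v \<bullet> (A *v v)) *\<^sub>R v" using B'(3) v unfolding B_def by auto
    moreover have "span B = S"
    proof
      show "span B \<subseteq> S" using \<open>B \<subseteq> S\<close> less.prems(1) by (simp add: span_minimal)
      show "S \<subseteq> span B"
      proof
        fix x assume x: "x \<in> S"
        have "x - (v \<bullet> x) *\<^sub>R v \<in> S'" unfolding S'_def using x v(1) vv less.prems(1)
          by (simp add: subspace_diff subspace_scale inner_diff_right)
        hence "x - (v \<bullet> x) *\<^sub>R v \<in> span B" using B'(4) unfolding B_def by (metis span_mono subset_insertI subsetD)
        moreover have "(v \<bullet> x) *\<^sub>R v \<in> span B" unfolding B_def by (simp add: span_base span_mul)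
        ultimately have "(x - (v \<bullet> x) *\<^sub>R v) + (v \<bullet> x) *\<^sub>R v \<in> span B" by (rule span_add)
        thus "x \<in> span B" by simp
      qed
    qed
    ultimately show ?thesis by blast
  qed
qed

lemma spectral:
  fixes A :: "real^'n^'n"
  assumes sym: "transpose A = A"
  obtains B where "finite B" "pairwise orthogonal B" "\<And>v. v\<in>B \<Longrightarrow> norm v = 1"
    "\<And>v. v\<in>B \<Longrightarrow> A *v v = (v \<bullet> (A *v v)) *\<^sub>R v" "span B = UNIV"
proof -
  obtain B where B: "pairwise orthogonal B" "\<forall>v\<in>B. norm v = 1 \<and> A *v v = (v \<bullet> (A *v v)) *\<^sub>R v" "span B = UNIV"
    using spectral_sub[OF sym, of UNIV] by auto
  have "0 \<notin> B" using B(2) by force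
  hence "independent B" using B(1) pairwise_orthogonal_independent by blast
  hence "finite B" using independent_bound by blast
  thus ?thesis using that B by blast
qed

lemma eigset:
  fixes A :: "real^'n^'n"
  assumes sym: "transpose A = A" and B: "finite B" "pairwise orthogonal B" "\<And>v. v\<in>B \<Longrightarrow> norm v = 1"
    "\<And>v. v\<in>B \<Longrightarrow> A *v v = (v \<bullet> (A *v v)) *\<^sub>R v" "span B = UNIV"
  shows "mat_eigenvalues A = (\<lambda>v. v \<bullet> (A *v v)) ` B"
proof
  show "(\<lambda>v. v \<bullet> (A *v v)) ` B \<subseteq> mat_eigenvalues A"
  proof
    fix l assume "l \<in> (\<lambda>v. v \<bullet> (A *v v)) ` B"
    then obtain v where v: "v \<in> B" "l = v \<bullet> (A *v v)" by blast
    have "v \<noteq> 0" using B(3) v by force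
    thus "l \<in> mat_eigenvalues A" unfolding mat_eigenvalues_def using B(4) v by (auto simp: smult_scaleR)
  qed
  show "mat_eigenvalues A \<subseteq> (\<lambda>v. v \<bullet> (A *v v)) ` B"
  proof
    fix l assume "l \<in> mat_eigenvalues A"
    then obtain w where w: "w \<noteq> 0" "A *v w = l *\<^sub>R w" unfolding mat_eigenvalues_def by (auto simp: smult_scaleR)
    have "\<exists>u\<in>B. w \<bullet> u \<noteq> 0"
    proof (rule ccontr)
      assume "\<not> ?thesis"
      hence "(\<Sum>i\<in>B. (w \<bullet> i) *\<^sub>R i) = 0" by simp
      moreover have "(\<Sum>i\<in>B. (w \<bullet> i) *\<^sub>R i) = w" using orthonormal_basis_expand[OF B(2) B(3)] B(5) B(1) by simp
      ultimately show False using w(1) by simp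
    qed
    then obtain u where u: "u \<in> B" "w \<bullet> u \<noteq> 0" by blast
    have "l * (w \<bullet> u) = (A *v w) \<bullet> u" using w(2) by simp
    also have "\<dots> = w \<bullet> (A *v u)" using sym_inner[OF sym] by simp
    also have "\<dots> = (u \<bullet> (A *v u)) * (w \<bullet> u)" by (metis B(4) u(1) inner_scaleR_right)
    finally have "l = u \<bullet> (A *v u)" using u(2) by simp
    thus "l \<in> (\<lambda>v. v \<bullet> (A *v v)) ` B" using u(1) by blast
  qed
qed

lemma entry_formula:
  fixes A :: "real^'n^'n"
  assumes B: "finite B" "pairwise orthogonal B" "\<And>v. v\<in>B \<Longrightarrow> norm v = 1"
    "\<And>v. v\<in>B \<Longrightarrow> A *v v = lam v *\<^sub>R v" "span B = UNIV"
  shows "A $ i $ j = (\<Sum>v\<in>B. lam v * (v $ i * v $ j))"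
proof -
  have "(\<Sum>v\<in>B. (axis j 1 \<bullet> v) *\<^sub>R v) = (axis j (1::real) :: real^'n)"
    using orthonormal_basis_expand[OF B(2) B(3)] B(5) B(1) by simp
  hence "A *v axis j 1 = A *v (\<Sum>v\<in>B. (axis j 1 \<bullet> v) *\<^sub>R v)" by simp
  also have "\<dots> = (\<Sum>v\<in>B. A *v ((axis j 1 \<bullet> v) *\<^sub>R v))"
    by (rule linear_sum[OF matrix_vector_mul_linear])
  also have "\<dots> = (\<Sum>v\<in>B. (axis j 1 \<bullet> v) *\<^sub>R (A *v v))"
    by (simp only: matrix_vector_mult_scaleR)
  also have "\<dots> = (\<Sum>v\<in>B. (v $ j * lam v) *\<^sub>R v)"
    using B(4) by (intro sum.cong) (auto simp: inner_axis')
  finally have "(A *v axis j 1) $ i = (\<Sum>v\<in>B. (v $ j * lam v) * v $ i)" by (simp add: sum_component)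
  moreover have "(A *v axis j 1) $ i = A $ i $ j" by (simp add: matrix_vector_mult_basis column_def)
  ultimately show ?thesis by (simp add: algebra_simps)
qed

lemma inner_formula:
  fixes A X :: "real^'n^'n"
  assumes B: "finite B" "pairwise orthogonal B" "\<And>v. v\<in>B \<Longrightarrow> norm v = 1"
    "\<And>v. v\<in>B \<Longrightarrow> A *v v = lam v *\<^sub>R v" "span B = UNIV"
  shows "X \<bullet> A = (\<Sum>v\<in>B. lam v * (v \<bullet> (X *v v)))"
proof -
  have "X \<bullet> A = (\<Sum>i\<in>UNIV. \<Sum>j\<in>UNIV. X$i$j * A$i$j)"
    by (simp add: inner_vec_def)
  also have "\<dots> = (\<Sum>i\<in>UNIV. \<Sum>j\<in>UNIV. \<Sum>v\<in>B. lam v * (v$i * (X$i$j * v$j)))"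
    by (intro sum.cong refl) (simp add: entry_formula[OF B] sum_distrib_left mult_ac)
  also have "\<dots> = (\<Sum>i\<in>UNIV. \<Sum>v\<in>B. \<Sum>j\<in>UNIV. lam v * (v$i * (X$i$j * v$j)))"
    by (intro sum.cong refl) (rule sum.swap)
  also have "\<dots> = (\<Sum>v\<in>B. \<Sum>i\<in>UNIV. \<Sum>j\<in>UNIV. lam v * (v$i * (X$i$j * v$j)))"
    by (rule sum.swap)
  also have "\<dots> = (\<Sum>v\<in>B. lam v * (\<Sum>i\<in>UNIV. v$i * (\<Sum>j\<in>UNIV. X$i$j * v$j)))"
    by (simp only: sum_distrib_left)
  also have "\<dots> = (\<Sum>v\<in>B. lam v * (v \<bullet> (X *v v)))"
    by (simp add: inner_vec_def matrix_vector_mult_def)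
  finally show ?thesis .
qed

lemma Vspace_iff: "X \<in> Vspace blk \<longleftrightarrow> (\<forall>i j. X$j$i = X$i$j) \<and> (\<forall>i j. blk i \<noteq> blk j \<longrightarrow> X$i$j = 0)"
  unfolding Vspace_def by (auto simp: vec_eq_iff transpose_def)

lemma Vspace_add: "X \<in> Vspace blk \<Longrightarrow> Y \<in> Vspace blk \<Longrightarrow> X + Y \<in> Vspace blk"
  by (simp add: Vspace_iff)
lemma Vspace_diff: "X \<in> Vspace blk \<Longrightarrow> Y \<in> Vspace blk \<Longrightarrow> X - Y \<in> Vspace blk"
  by (simp add: Vspace_iff)
lemma Vspace_scale: "X \<in> Vspace blk \<Longrightarrow> c *\<^sub>R X \<in> Vspace blk"
  by (simp add: Vspace_iff)
lemma Vspace_mat1: "mat 1 \<in> Vspace blk"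
  by (auto simp: Vspace_iff mat_def)
lemma Vspace_sym: "X \<in> Vspace blk \<Longrightarrow> transpose X = X"
  by (simp add: Vspace_def)

lemma dual_add: "X \<in> dual_cone blk J \<Longrightarrow> Y \<in> dual_cone blk J \<Longrightarrow> X + Y \<in> dual_cone blk J"
  unfolding dual_cone_def by (auto simp: Vspace_add inner_add_right)
lemma dual_scale: "X \<in> dual_cone blk J \<Longrightarrow> c \<ge> 0 \<Longrightarrow> c *\<^sub>R X \<in> dual_cone blk J"
  unfolding dual_cone_def by (auto simp: Vspace_scale)

lemma psd_scale: "X \<in> psd_cone blk \<Longrightarrow> c \<ge> 0 \<Longrightarrow> c *\<^sub>R X \<in> psd_cone blk"
  unfolding psd_cone_def by (auto simp: Vspace_scale matrix_scaleR_vector_ac[symmetric] matrix_vector_mult_scaleR)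
lemma psd_add: "X \<in> psd_cone blk \<Longrightarrow> Y \<in> psd_cone blk \<Longrightarrow> X + Y \<in> psd_cone blk"
  unfolding psd_cone_def by (auto simp: Vspace_add matrix_vector_mult_add_rdistrib inner_add_right)

lemma lmin_facts:
  fixes M :: "real^'n^'n"
  assumes sym: "transpose M = M"
  shows "(\<exists>v. v \<noteq> 0 \<and> M *v v = lambda_min M *\<^sub>R v) \<and>
    (\<forall>X::real^'n^'n. (\<forall>x. 0 \<le> x \<bullet> (X *v x)) \<longrightarrow> lambda_min M * (X \<bullet> mat 1) \<le> X \<bullet> M)"
proof -
  obtain B where B: "finite B" "pairwise orthogonal B" "\<And>v. v\<in>B \<Longrightarrow> norm v = 1"
    "\<And>v. v\<in>B \<Longrightarrow> M *v v = (v \<bullet> (M *v v)) *\<^sub>R v" "span B = UNIV"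
    using spectral[OF sym] by blast
  define lam where "lam v = v \<bullet> (M *v v)" for v
  have Bl: "\<And>v. v\<in>B \<Longrightarrow> M *v v = lam v *\<^sub>R v" unfolding lam_def by (rule B(4))
  have E: "mat_eigenvalues M = lam ` B" unfolding lam_def by (rule eigset[OF sym B])
  have Bne: "B \<noteq> {}" using B(5) by (metis UNIV_not_singleton span_empty)
  have fin: "finite (lam ` B)" using B(1) by simp
  have lm: "lambda_min M = Min (lam ` B)" unfolding lambda_min_def E ..
  have "lambda_min M \<in> lam ` B" unfolding lm using fin Bne by (intro Min_in) auto
  then obtain u where u: "u \<in> B" "lambda_min M = lam u" by blast
  have ex: "\<exists>v. v \<noteq> 0 \<and> M *v v = lambda_min M *\<^sub>R v"
    apply (rule exI[of _ u]) using u B(3)[OF u(1)] B(4)[OF u(1)] unfolding lam_def by force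
  have le: "lambda_min M \<le> lam v" if "v \<in> B" for v unfolding lm using fin that by simp
  have ineq: "lambda_min M * (X \<bullet> mat 1) \<le> X \<bullet> M" if X: "\<forall>x. 0 \<le> x \<bullet> (X *v x)" for X :: "real^'n^'n"
  proof -
    have "X \<bullet> mat 1 = (\<Sum>v\<in>B. 1 * (v \<bullet> (X *v v)))"
      using inner_formula[OF B(1,2,3) _ B(5), where A="mat 1" and lam="\<lambda>_. 1" and X=X] by (simp add: matrix_vector_mul_lid)
    hence "lambda_min M * (X \<bullet> mat 1) = (\<Sum>v\<in>B. lambda_min M * (v \<bullet> (X *v v)))"
      by (simp add: sum_distrib_left)
    also have "\<dots> \<le> (\<Sum>v\<in>B. lam v * (v \<bullet> (X *v v)))"
      using le X by (intro sum_mono mult_right_mono) auto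
    also have "\<dots> = X \<bullet> M"
      using inner_formula[OF B(1,2,3) Bl B(5), of X] by simp
    finally show ?thesis .
  qed
  show ?thesis using ex ineq by blast
qed

lemma outer_inner: "(\<chi> i j. u$i * u$j) \<bullet> (A::real^'n^'n) = u \<bullet> (A *v u)"
  by (simp add: inner_vec_def matrix_vector_mult_def sum_distrib_left mult_ac)

lemma outer_quad: "x \<bullet> ((\<chi> i j. u$i * u$j) *v x) = (u \<bullet> (x::real^'n))^2"
  by (simp add: inner_vec_def matrix_vector_mult_def sum_distrib_left sum_distrib_right power2_eq_square mult_ac)

lemma outer_norm: "norm (\<chi> i j. u$i * u$j) = (u \<bullet> (u::real^'n))"
proof -
  have "(norm (\<chi> i j. u$i * u$j))^2 = (u \<bullet> u)^2"
    by (simp add: power2_norm_eq_inner outer_inner outer_quad)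
  thus ?thesis by (simp add: power2_eq_iff_nonneg)
qed

lemma block_eig:
  fixes M :: "real^'n^'n"
  assumes MV: "M \<in> Vspace blk" and ev: "M *v v = l *\<^sub>R v"
    and vb_def: "vb = (\<chi> i. if blk i = blk k then v$i else 0)"
  shows "M *v vb = l *\<^sub>R vb"
proof -
  have z: "M$i$j = 0" if "blk i \<noteq> blk j" for i j using MV that by (simp add: Vspace_iff)
  show ?thesis
  proof (subst vec_eq_iff, intro allI)
    fix i
    show "(M *v vb) $ i = (l *\<^sub>R vb) $ i"
    proof (cases "blk i = blk k")
      case True
      have "(M *v vb) $ i = (\<Sum>j\<in>UNIV. M$i$j * vb$j)" by (simp add: matrix_vector_mult_def)
      also have "\<dots> = (\<Sum>j\<in>UNIV. M$i$j * v$j)"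
        by (intro sum.cong refl) (use True z in \<open>auto simp: vb_def\<close>)
      also have "\<dots> = (M *v v)$i" by (simp add: matrix_vector_mult_def)
      finally show ?thesis using ev True by (simp add: vb_def)
    next
      case False
      have "(M *v vb) $ i = (\<Sum>j\<in>UNIV. M$i$j * vb$j)" by (simp add: matrix_vector_mult_def)
      also have "\<dots> = 0"
        by (intro sum.neutral ballI) (use False z in \<open>auto simp: vb_def\<close>)
      finally show ?thesis using False by (simp add: vb_def)
    qed
  qed
qed
theorem lemma3p3:
  fixes blk :: "'n::finite \<Rightarrow> 'b"
    and K2 :: "(real^'n^'n) set"
    and Q H Y1h Y2h :: "real^'n^'n"
    and rho y :: real
  assumes K2_sub: "K2 \<subseteq> Vspace blk"
    and K2_closed: "closed K2"
    and K2_cone: "convex_cone K2"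
    and QV: "Q \<in> Vspace blk"
    and HV: "H \<in> Vspace blk"
    and condI_feas: "primal_feasible blk K2 H \<noteq> {}"
    and condI_H: "H \<in> {Y1 + Y2 | Y1 Y2. Y1 \<in> dual_cone blk (psd_cone blk) \<and> Y2 \<in> dual_cone blk K2}"
    and condII: "dual_cone blk (psd_cone blk \<inter> K2) =
       {Y1 + Y2 | Y1 Y2. Y1 \<in> dual_cone blk (psd_cone blk) \<and> Y2 \<in> dual_cone blk K2}"
    and condIII_pos: "rho > 0"
    and condIII: "\<forall>X \<in> primal_feasible blk K2 H. mat 1 \<bullet> X \<le> rho"
    and g_pos: "gfun blk K2 Q H y > 0"
    and Y1h: "Y1h \<in> dual_cone blk (psd_cone blk)"
    and Y2h: "Y2h \<in> dual_cone blk K2"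
    and opt: "\<forall>Y1 \<in> dual_cone blk (psd_cone blk). \<forall>Y2 \<in> dual_cone blk K2.
       norm (Gmap Q H y - (Y1h + Y2h)) \<le> norm (Gmap Q H y - (Y1 + Y2))"
  shows "y - rho * gfun blk K2 Q H y \<le> y + rho * ttilde Q H y Y2h
     \<and> y + rho * ttilde Q H y Y2h \<le> dual_opt blk K2 Q H"
proof -
  define K1s where "K1s = dual_cone blk (psd_cone blk)"
  define K2s where "K2s = dual_cone blk K2"
  define G where "G = Gmap Q H y"
  define M where "M = G - Y2h"
  define lm where "lm = lambda_min M"
  have GV: "G \<in> Vspace blk" unfolding G_def Gmap_def using QV HV by (simp add: Vspace_diff Vspace_scale)
  have Y2V: "Y2h \<in> Vspace blk" using Y2h by (simp add: dual_cone_def)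
  have Y1V: "Y1h \<in> Vspace blk" using Y1h by (simp add: dual_cone_def)
  have MV: "M \<in> Vspace blk" unfolding M_def using GV Y2V by (rule Vspace_diff)
  have msym: "transpose M = M" using MV by (rule Vspace_sym)
  note LF = lmin_facts[OF msym]
  have tt: "ttilde Q H y Y2h = min 0 lm" unfolding ttilde_def lm_def M_def G_def ..
  have geq: "gfun blk K2 Q H y = norm (M - Y1h)"
  proof -
    have "gfun blk K2 Q H y = norm (G - (Y1h + Y2h))"
      unfolding gfun_def G_def[symmetric]
      by (rule cInf_eq_minimum) (use Y1h Y2h opt G_def in auto)
    thus ?thesis unfolding M_def by (simp add: algebra_simps)
  qed
  have part1: "- norm (M - Y1h) \<le> min 0 lm"
  proof (cases "lm < 0")
    case False thus ?thesis by simp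
  next
    case True
    obtain v where v: "v \<noteq> 0" "M *v v = lm *\<^sub>R v" using LF unfolding lm_def by blast
    obtain k where k: "v $ k \<noteq> 0" using v(1) by (metis vec_eq_iff zero_index)
    define vb where "vb = (\<chi> i. if blk i = blk k then v$i else 0)"
    have vbe: "M *v vb = lm *\<^sub>R vb" by (rule block_eig[OF MV v(2) vb_def])
    have "vb $ k \<noteq> 0" using k by (simp add: vb_def)
    hence vbne: "vb \<noteq> 0" by auto
    hence vbpos: "vb \<bullet> vb > 0" by simp
    define X where "X = (\<chi> i j. vb$i * vb$j)"
    have XV: "X \<in> Vspace blk" unfolding Vspace_iff X_def by (auto simp: vb_def)
    have Xpsd: "X \<in> psd_cone blk" unfolding psd_cone_def using XV by (simp add: X_def outer_quad)
    have "0 \<le> X \<bullet> Y1h" using Y1h Xpsd unfolding dual_cone_def by auto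
    moreover have "X \<bullet> M = lm * (vb \<bullet> vb)" unfolding X_def outer_inner vbe by simp
    ultimately have "- lm * (vb \<bullet> vb) \<le> X \<bullet> (Y1h - M)" by (simp add: inner_diff_right)
    also have "\<dots> \<le> norm X * norm (Y1h - M)" by (rule norm_cauchy_schwarz)
    also have "\<dots> = (vb \<bullet> vb) * norm (M - Y1h)" unfolding X_def outer_norm by (simp add: norm_minus_commute)
    finally have "(- lm) * (vb \<bullet> vb) \<le> norm (M - Y1h) * (vb \<bullet> vb)" by (simp add: mult.commute)
    hence "- lm \<le> norm (M - Y1h)" using vbpos by (rule mult_right_le_imp_le)
    thus ?thesis by simp
  qed
  obtain X0 where X0: "X0 \<in> primal_feasible blk K2 H" using condI_feas by blast
  have X0p: "X0 \<in> psd_cone blk" "X0 \<in> K2" "H \<bullet> X0 = 1" using X0 unfolding primal_feasible_def by auto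
  have Hdual: "0 \<le> H \<bullet> X" if "X \<in> psd_cone blk" "X \<in> K2" for X
  proof -
    obtain Z1 Z2 where Z: "H = Z1 + Z2" "Z1 \<in> K1s" "Z2 \<in> K2s" using condI_H unfolding K1s_def K2s_def by blast
    have "0 \<le> X \<bullet> Z1" "0 \<le> X \<bullet> Z2" using Z that unfolding K1s_def K2s_def dual_cone_def by auto
    thus ?thesis using Z(1) by (simp add: inner_add_left inner_add_right inner_commute)
  qed
  have trpos: "0 \<le> mat 1 \<bullet> X" if "X \<in> psd_cone blk" for X
  proof -
    have "mat 1 \<bullet> X = (\<Sum>i\<in>UNIV. X$i$i)"
      by (simp add: inner_vec_def mat_def of_bool_def[symmetric])
    also have "\<dots> = (\<Sum>i\<in>UNIV. axis i 1 \<bullet> (X *v axis i 1))"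
      by (simp add: matrix_vector_mult_basis column_def inner_axis')
    also have "\<dots> \<ge> 0" using that unfolding psd_cone_def by (auto intro: sum_nonneg)
    finally show ?thesis .
  qed
  have trb: "mat 1 \<bullet> X \<le> rho * (H \<bullet> X)" if X: "X \<in> psd_cone blk" "X \<in> K2" for X
  proof (cases "H \<bullet> X = 0")
    case False
    hence hp: "H \<bullet> X > 0" using Hdual[OF X] by simp
    define X' where "X' = (1 / (H \<bullet> X)) *\<^sub>R X"
    have "X' \<in> psd_cone blk" unfolding X'_def using X hp by (intro psd_scale) auto
    moreover have "X' \<in> K2" unfolding X'_def using X hp by (intro convex_cone_scaleR[OF K2_cone]) auto
    moreover have "H \<bullet> X' = 1" unfolding X'_def using hp by simp
    ultimately have "X' \<in> primal_feasible blk K2 H" unfolding primal_feasible_def by blast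
    hence "mat 1 \<bullet> X' \<le> rho" using condIII by blast
    thus ?thesis using hp unfolding X'_def by (simp add: field_simps)
  next
    case True
    have "s * (mat 1 \<bullet> X) \<le> rho" if s: "s \<ge> 0" for s
    proof -
      have "X0 + s *\<^sub>R X \<in> psd_cone blk" using X s X0p by (intro psd_add psd_scale) auto
      moreover have "X0 + s *\<^sub>R X \<in> K2" using X s X0p
        by (intro convex_cone_add[OF K2_cone] convex_cone_scaleR[OF K2_cone]) auto
      moreover have "H \<bullet> (X0 + s *\<^sub>R X) = 1" using X0p True by (simp add: inner_add_right)
      ultimately have "X0 + s *\<^sub>R X \<in> primal_feasible blk K2 H" unfolding primal_feasible_def by blast
      hence "mat 1 \<bullet> (X0 + s *\<^sub>R X) \<le> rho" using condIII by blast
      moreover have "0 \<le> mat 1 \<bullet> X0" using trpos X0p by blast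
      ultimately show ?thesis by (simp add: inner_add_right)
    qed
    hence "mat 1 \<bullet> X \<le> 0"
    proof -
      assume h: "\<And>s. 0 \<le> s \<Longrightarrow> s * (mat 1 \<bullet> X) \<le> rho"
      show ?thesis
      proof (rule ccontr)
        assume "\<not> mat 1 \<bullet> X \<le> 0"
        hence c: "mat 1 \<bullet> X > 0" by simp
        have "((rho + 1) / (mat 1 \<bullet> X)) * (mat 1 \<bullet> X) \<le> rho" using c condIII_pos by (intro h) simp
        thus False using c by simp
      qed
    qed
    thus ?thesis using True by simp
  qed
  have Zmem: "rho *\<^sub>R H - mat 1 \<in> dual_cone blk (psd_cone blk \<inter> K2)"
    unfolding dual_cone_def using trb
    by (auto intro!: Vspace_diff Vspace_scale HV Vspace_mat1 simp: inner_diff_right inner_commute)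
  then obtain Z1 Z2 where Z: "rho *\<^sub>R H - mat 1 = Z1 + Z2" "Z1 \<in> K1s" "Z2 \<in> K2s"
    using condII unfolding K1s_def K2s_def by auto
  define t where "t = min 0 lm"
  define s where "s = - t"
  have s0: "s \<ge> 0" unfolding s_def t_def by simp
  have tle: "t \<le> lm" unfolding t_def by simp
  have MtI: "M + s *\<^sub>R mat 1 \<in> K1s"
    unfolding K1s_def dual_cone_def
  proof (intro CollectI conjI ballI)
    show "M + s *\<^sub>R mat 1 \<in> Vspace blk" by (intro Vspace_add Vspace_scale MV Vspace_mat1)
    fix X assume X: "X \<in> psd_cone blk"
    have q: "\<forall>x. 0 \<le> x \<bullet> (X *v x)" using X unfolding psd_cone_def by auto
    have "lm * (X \<bullet> mat 1) \<le> X \<bullet> M" using LF q unfolding lm_def by blast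
    moreover have "t * (X \<bullet> mat 1) \<le> lm * (X \<bullet> mat 1)"
      using tle trpos[OF X] by (intro mult_right_mono) (auto simp: inner_commute)
    ultimately show "0 \<le> X \<bullet> (M + s *\<^sub>R mat 1)" unfolding s_def by (simp add: inner_add_right inner_diff_right)
  qed
  define y' where "y' = y + rho * t"
  have feas: "Gmap Q H y' = (M + s *\<^sub>R mat 1 + s *\<^sub>R Z1) + (Y2h + s *\<^sub>R Z2)"
  proof -
    have "Gmap Q H y' = G + s *\<^sub>R (rho *\<^sub>R H)" unfolding G_def Gmap_def y'_def s_def
      by (simp add: algebra_simps)
    also have "\<dots> = G + s *\<^sub>R (mat 1 + Z1 + Z2)" using Z(1) by (metis diff_eq_eq add.commute add.assoc)
    finally show ?thesis unfolding M_def by (simp add: algebra_simps)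
  qed
  have y'mem: "y' \<in> {y. \<exists>Y1 Y2. Gmap Q H y = Y1 + Y2 \<and> Y1 \<in> dual_cone blk (psd_cone blk) \<and> Y2 \<in> dual_cone blk K2}"
    using feas MtI Z(2,3) Y2h s0 unfolding K1s_def K2s_def
    by (auto intro!: dual_add dual_scale)
  have bdd: "bdd_above {y. \<exists>Y1 Y2. Gmap Q H y = Y1 + Y2 \<and> Y1 \<in> dual_cone blk (psd_cone blk) \<and> Y2 \<in> dual_cone blk K2}"
  proof (rule bdd_aboveI)
    fix z assume "z \<in> {y. \<exists>Y1 Y2. Gmap Q H y = Y1 + Y2 \<and> Y1 \<in> dual_cone blk (psd_cone blk) \<and> Y2 \<in> dual_cone blk K2}"
    then obtain Y1 Y2 where YY: "Gmap Q H z = Y1 + Y2" "Y1 \<in> dual_cone blk (psd_cone blk)" "Y2 \<in> dual_cone blk K2" by blast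
    have "0 \<le> X0 \<bullet> Y1" "0 \<le> X0 \<bullet> Y2" using YY X0p unfolding dual_cone_def by auto
    hence "0 \<le> X0 \<bullet> Gmap Q H z" using YY(1) by (simp add: inner_add_right)
    thus "z \<le> Q \<bullet> X0" using X0p(3) by (simp add: Gmap_def inner_diff_right inner_commute)
  qed
  have p2: "y' \<le> dual_opt blk K2 Q H" unfolding dual_opt_def by (rule cSup_upper[OF y'mem bdd])
  have "rho * (- norm (M - Y1h)) \<le> rho * min 0 lm"
    using part1 condIII_pos by (intro mult_left_mono) auto
  thus ?thesis using p2 geq tt unfolding y'_def t_def by simp
qed
end
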